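(* With notation as in the context, let $\mathcal A_y$ be the $*$-subalgebra of $\mathcal A$ generated by $C_K(X)$ and $C_{c,K}(X\setminus\{y\})\,t$. Then $\mathcal A_\infty=\mathcal A_y$.
   Context: Let $X$ be an infinite, totally disconnected, compact metrizable space, $T$ a homeomorphism, $K$ a field with involution, $C_K(X)$ the $*$-algebra of locally constant functions $X\to K$, $\mathcal A=C_K(X)\rtimes_T\mathbb Z$ the algebraic crossed product (finite sums $\sum f_it^i$, $tf=(f\circ T^{-1})t$, $(ft^i)^*=t^{-i}f^*$). For an open $U\subseteq X$, $C_{c,K}(U)$ is the ideal of $C_K(X)$ generated (equivalently, spanned) by the $\chi_V$ with $V\subseteq U$ clopen. Fix $y\in X$, a decreasing sequence of clopen sets $E_n$ with $\bigcap_nE_n=\{y\}$, and partitions $\mathcal P_n$ of $X\setminus E_n$ (finite families of nonempty pairwise disjoint clopen sets with union $X\setminus E_n$) such that each member of $\mathcal P_{n+1}\cup\{E_{n+1}\}$ lies in a member of $\mathcal P_n\cup\{E_n\}$ and $\bigcup_n(\mathcal P_n\cup\{E_n\})$ generates the topology of $X$. $\mathcal A_n$ is the unital $*$-subalgebra of $\mathcal A$ generated by $\{\chi_Zt:Z\in\mathcal P_n\}$ and $\mathcal A_\infty=\bigcup_n\mathcal A_n$. *)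

theory Defs
  imports "HOL-Analysis.Analysis"
begin

definition totally_disconnected_space :: "'a::topological_space itself \<Rightarrow> bool" where
  "totally_disconnected_space _ \<longleftrightarrow> (\<forall>S::'a set. connected S \<longrightarrow> (\<exists>a. S \<subseteq> {a}))"

definition clopen_set :: "'a::topological_space set \<Rightarrow> bool" where
  "clopen_set V \<longleftrightarrow> open V \<and> closed V"

definition loc_const :: "('a::topological_space \<Rightarrow> 'k) \<Rightarrow> bool" where
  "loc_const f \<longleftrightarrow> (\<forall>x. \<exists>U. open U \<and> x \<in> U \<and> (\<forall>z\<in>U. f z = f x))"

definition chi :: "'a set \<Rightarrow> 'a \<Rightarrow> 'k::field" where
  "chi V = (\<lambda>x. if x \<in> V then 1 else 0)"

definition CcK :: "'a::topological_space set \<Rightarrow> ('a \<Rightarrow> 'k::field) set" where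
  "CcK U = {f. \<exists>(n::nat) (c::nat \<Rightarrow> 'k) (V::nat \<Rightarrow> 'a set).
              (\<forall>i<n. clopen_set (V i) \<and> V i \<subseteq> U) \<and>
              f = (\<lambda>x. \<Sum>i<n. c i * chi (V i) x)}"

definition Tpow :: "('a \<Rightarrow> 'a) \<Rightarrow> int \<Rightarrow> 'a \<Rightarrow> 'a" where
  "Tpow T i = (if 0 \<le> i then T ^^ nat i else (inv T) ^^ nat (- i))"

text \<open>The algebraic crossed product C_K(X) x_T Z: an element sum_i f_i t^i is
  represented by the finitely supported coefficient map i |-> f_i.\<close>
definition CP :: "(int \<Rightarrow> 'a::topological_space \<Rightarrow> 'k::field) set" where
  "CP = {a. finite {i. a i \<noteq> (\<lambda>_. 0)} \<and> (\<forall>i. loc_const (a i))}"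

definition cp_mono :: "int \<Rightarrow> ('a \<Rightarrow> 'k::field) \<Rightarrow> int \<Rightarrow> 'a \<Rightarrow> 'k" where
  "cp_mono i f = (\<lambda>k. if k = i then f else (\<lambda>_. 0))"

definition cp_one :: "int \<Rightarrow> 'a \<Rightarrow> 'k::field" where
  "cp_one = cp_mono 0 (\<lambda>_. 1)"

text \<open>Product determined by (f t^i)(g t^j) = f (g o T^{-i}) t^{i+j}.\<close>
definition cp_mult :: "('a \<Rightarrow> 'a) \<Rightarrow> (int \<Rightarrow> 'a \<Rightarrow> 'k::field) \<Rightarrow> (int \<Rightarrow> 'a \<Rightarrow> 'k) \<Rightarrow> int \<Rightarrow> 'a \<Rightarrow> 'k" where
  "cp_mult T a b = (\<lambda>k x. \<Sum>i\<in>{i. a i \<noteq> (\<lambda>_. 0)}. a i x * b (k - i) (Tpow T (- i) x))"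

text \<open>Involution determined by (f t^i)^* = t^{-i} f^* = (f^* o T^i) t^{-i}.\<close>
definition cp_star :: "('a \<Rightarrow> 'a) \<Rightarrow> ('k \<Rightarrow> 'k) \<Rightarrow> (int \<Rightarrow> 'a \<Rightarrow> 'k::field) \<Rightarrow> int \<Rightarrow> 'a \<Rightarrow> 'k" where
  "cp_star T cj a = (\<lambda>k x. cj (a (- k) (Tpow T (- k) x)))"

definition cp_smult :: "'k \<Rightarrow> (int \<Rightarrow> 'a \<Rightarrow> 'k::field) \<Rightarrow> int \<Rightarrow> 'a \<Rightarrow> 'k" where
  "cp_smult c a = (\<lambda>k x. c * a k x)"

definition star_subalg :: "('a::topological_space \<Rightarrow> 'a) \<Rightarrow> ('k \<Rightarrow> 'k) \<Rightarrow> (int \<Rightarrow> 'a \<Rightarrow> 'k::field) set \<Rightarrow> bool" where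
  "star_subalg T cj B \<longleftrightarrow> B \<subseteq> CP \<and> (\<lambda>_ _. 0) \<in> B \<and>
     (\<forall>a\<in>B. \<forall>b\<in>B. (\<lambda>k x. a k x + b k x) \<in> B) \<and>
     (\<forall>c. \<forall>a\<in>B. cp_smult c a \<in> B) \<and>
     (\<forall>a\<in>B. \<forall>b\<in>B. cp_mult T a b \<in> B) \<and>
     (\<forall>a\<in>B. cp_star T cj a \<in> B)"

definition gen_star_subalg :: "('a::topological_space \<Rightarrow> 'a) \<Rightarrow> ('k \<Rightarrow> 'k) \<Rightarrow> (int \<Rightarrow> 'a \<Rightarrow> 'k::field) set \<Rightarrow> (int \<Rightarrow> 'a \<Rightarrow> 'k) set" where
  "gen_star_subalg T cj S = \<Inter>{B. star_subalg T cj B \<and> S \<subseteq> B}"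

definition gen_unital_star_subalg :: "('a::topological_space \<Rightarrow> 'a) \<Rightarrow> ('k \<Rightarrow> 'k) \<Rightarrow> (int \<Rightarrow> 'a \<Rightarrow> 'k::field) set \<Rightarrow> (int \<Rightarrow> 'a \<Rightarrow> 'k) set" where
  "gen_unital_star_subalg T cj S = gen_star_subalg T cj (insert cp_one S)"

end

theory Submission
  imports Defs
begin


lemma lc_open_vimage:
  assumes "loc_const f" shows "open (f -` S)"
proof (subst open_subopen, intro ballI)
  fix x assume x: "x \<in> f -` S"
  from assms obtain U where U: "open U" "x \<in> U" "\<forall>z\<in>U. f z = f x" unfolding loc_const_def by blast
  have "U \<subseteq> f -` S" using U(3) x by auto
  then show "\<exists>T. open T \<and> x \<in> T \<and> T \<subseteq> f -` S" using U by blast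
qed

lemma lc_comp:
  assumes "loc_const f" "\<And>U. open U \<Longrightarrow> open (h -` U)" shows "loc_const (\<lambda>x. f (h x))"
  unfolding loc_const_def
proof (rule allI)
  fix x
  from assms(1) have "\<exists>U. open U \<and> h x \<in> U \<and> (\<forall>z\<in>U. f z = f (h x))" unfolding loc_const_def by (rule spec)
  then obtain U where U: "open U" "h x \<in> U" "\<forall>z\<in>U. f z = f (h x)" by blast
  have "open (h -` U)" using assms(2)[OF U(1)] .
  then show "\<exists>U. open U \<and> x \<in> U \<and> (\<forall>z\<in>U. f (h z) = f (h x))"
    using U by blast
qed

lemma lc_post: "loc_const f \<Longrightarrow> loc_const (\<lambda>x. g (f x))"
  unfolding loc_const_def by (metis (no_types, lifting))

lemma lc_const: "loc_const (\<lambda>x. c)"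
  unfolding loc_const_def by auto

lemma lc_bin:
  assumes "loc_const f" "loc_const g" shows "loc_const (\<lambda>x. F (f x) (g x))"
  unfolding loc_const_def
proof
  fix x
  from assms(1) obtain U where U: "open U" "x \<in> U" "\<forall>z\<in>U. f z = f x" unfolding loc_const_def by blast
  from assms(2) obtain V where V: "open V" "x \<in> V" "\<forall>z\<in>V. g z = g x" unfolding loc_const_def by blast
  show "\<exists>U. open U \<and> x \<in> U \<and> (\<forall>z\<in>U. F (f z) (g z) = F (f x) (g x))"
  proof (intro exI[of _ "U \<inter> V"] conjI)
    show "open (U \<inter> V)" using U(1) V(1) by (rule open_Int)
    show "x \<in> U \<inter> V" using U(2) V(2) by blast
    show "\<forall>z\<in>U \<inter> V. F (f z) (g z) = F (f x) (g x)" using U(3) V(3) by (metis IntD1 IntD2)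
  qed
qed

lemma lc_sum:
  assumes "finite A" "\<And>i. i \<in> A \<Longrightarrow> loc_const (f i)"
  shows "loc_const (\<lambda>x. (\<Sum>i\<in>A. f i x :: 'k::comm_monoid_add))"
  using assms
proof (induction A rule: finite_induct)
  case empty then show ?case by (simp add: lc_const)
next
  case (insert a A)
  have "loc_const (f a)" using insert.prems by simp
  moreover have "loc_const (\<lambda>x. (\<Sum>i\<in>A. f i x))" using insert.IH insert.prems by simp
  ultimately have "loc_const (\<lambda>x. f a x + (\<Sum>i\<in>A. f i x))" by (rule lc_bin)
  then show ?case using insert by simp
qed

lemma lc_chi:
  assumes "clopen_set V" shows "loc_const (chi V)"
  unfolding loc_const_def
proof
  fix x
  show "\<exists>U. open U \<and> x \<in> U \<and> (\<forall>z\<in>U. chi V z = chi V x)"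
  proof (cases "x \<in> V")
    case True then show ?thesis using assms by (intro exI[of _ V]) (auto simp: clopen_set_def chi_def)
  next
    case False then show ?thesis using assms
      by (intro exI[of _ "- V"]) (auto simp: clopen_set_def chi_def open_Compl)
  qed
qed

lemma lc_CcK:
  fixes f :: "'a::topological_space \<Rightarrow> 'k::field"
  shows "f \<in> CcK U \<Longrightarrow> loc_const f"
proof -
  assume "f \<in> CcK U"
  then obtain n :: nat and c :: "nat \<Rightarrow> 'k" and V :: "nat \<Rightarrow> 'a set" where V: "\<forall>i<n. clopen_set (V i) \<and> V i \<subseteq> U"
    and f: "f = (\<lambda>x. \<Sum>i<n. c i * chi (V i) x)" unfolding CcK_def mem_Collect_eq by blast
  have "\<And>i. i \<in> {..<n} \<Longrightarrow> loc_const (\<lambda>x. c i * chi (V i) x)"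
    using V lc_chi lc_post by blast
  then have "loc_const (\<lambda>x. \<Sum>i<n. c i * chi (V i) x)" by (intro lc_sum) auto
  then show ?thesis using f by simp
qed

lemma funpow_open_vimage:
  fixes h :: "'a::topological_space \<Rightarrow> 'a"
  assumes "\<And>U. open U \<Longrightarrow> open (h -` U)" shows "open U \<Longrightarrow> open ((h ^^ n) -` U)"
proof (induction n arbitrary: U)
  case 0
  have "(h ^^ 0) -` U = U" by auto
  then show ?case using 0 by simp
next
  case (Suc n)
  have "(h ^^ Suc n) -` U = (h ^^ n) -` (h -` U)" by auto
  have "open ((h ^^ n) -` (h -` U))" by (rule Suc.IH[OF assms[OF Suc.prems]])
  then show ?case using \<open>(h ^^ Suc n) -` U = (h ^^ n) -` (h -` U)\<close> by (simp only:)
qed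

lemma chi_Union:
  assumes "finite F" "\<And>A B. A \<in> F \<Longrightarrow> B \<in> F \<Longrightarrow> A \<noteq> B \<Longrightarrow> A \<inter> B = {}"
  shows "(chi (\<Union>F) x :: 'k::field) = (\<Sum>D\<in>F. chi D x)"
proof (cases "x \<in> \<Union>F")
  case True
  then obtain D0 where D0: "D0 \<in> F" "x \<in> D0" by blast
  have "(\<Sum>D\<in>F. chi D x :: 'k) = (\<Sum>D\<in>F. if D = D0 then 1 else 0)"
    using assms(2) D0 by (intro sum.cong) (auto simp: chi_def)
  also have "\<dots> = 1" using assms(1) D0 by (simp add: sum.delta)
  finally show ?thesis using True by (simp add: chi_def)
next
  case False
  then show ?thesis by (auto simp: chi_def intro!: sum.neutral)
qed

lemma cp_mono_add: "(\<lambda>k x. cp_mono i f k x + cp_mono i g k x) = cp_mono i (\<lambda>x. f x + g x)"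
  by (auto simp: cp_mono_def fun_eq_iff)

lemma cp_mono_smult: "cp_smult c (cp_mono i f) = cp_mono i (\<lambda>x. c * f x)"
  by (auto simp: cp_mono_def cp_smult_def fun_eq_iff)

lemma cp_mono_zero: "cp_mono i (\<lambda>x. 0) = (\<lambda>_ _. 0)"
  by (auto simp: cp_mono_def fun_eq_iff)

lemma cp_mono_mult:
  "cp_mult T (cp_mono i f) (cp_mono j g) = cp_mono (i+j) (\<lambda>x. f x * g (Tpow T (-i) x))"
proof (cases "f = (\<lambda>_. 0)")
  case True
  then have "{k. cp_mono i f k \<noteq> (\<lambda>_. 0)} = {}" by (auto simp: cp_mono_def)
  then show ?thesis using True by (auto simp: cp_mult_def cp_mono_def fun_eq_iff)
next
  case False
  then have "{k. cp_mono i f k \<noteq> (\<lambda>_. 0)} = {i}" by (auto simp: cp_mono_def)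
  then show ?thesis by (auto simp: cp_mult_def cp_mono_def fun_eq_iff)
qed

lemma CP_mono: "loc_const f \<Longrightarrow> cp_mono i f \<in> CP"
proof -
  assume "loc_const f"
  have "{k. cp_mono i f k \<noteq> (\<lambda>_. 0)} \<subseteq> {i}" by (auto simp: cp_mono_def)
  then have "finite {k. cp_mono i f k \<noteq> (\<lambda>_. 0)}" using finite_subset by blast
  then show ?thesis using \<open>loc_const f\<close> by (auto simp: CP_def cp_mono_def lc_const)
qed

lemma gen_least: "star_subalg T cj B \<Longrightarrow> S \<subseteq> B \<Longrightarrow> gen_star_subalg T cj S \<subseteq> B"
  unfolding gen_star_subalg_def by blast

lemma subalgD:
  assumes "star_subalg T cj B"
  shows "B \<subseteq> CP" "(\<lambda>_ _. 0) \<in> B"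
    "\<And>a b. a \<in> B \<Longrightarrow> b \<in> B \<Longrightarrow> (\<lambda>k x. a k x + b k x) \<in> B"
    "\<And>a c. a \<in> B \<Longrightarrow> cp_smult c a \<in> B"
    "\<And>a b. a \<in> B \<Longrightarrow> b \<in> B \<Longrightarrow> cp_mult T a b \<in> B"
    "\<And>a. a \<in> B \<Longrightarrow> cp_star T cj a \<in> B"
  using assms unfolding star_subalg_def by blast+

lemma gen_star_subalg:
  assumes "star_subalg T cj CP" "S \<subseteq> CP"
  shows "star_subalg T cj (gen_star_subalg T cj S)" "S \<subseteq> gen_star_subalg T cj S"
proof -
  let ?F = "{B. star_subalg T cj B \<and> S \<subseteq> B}"
  have CPF: "CP \<in> ?F" using assms by blast
  show "S \<subseteq> gen_star_subalg T cj S" unfolding gen_star_subalg_def by blast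
  have G: "gen_star_subalg T cj S = \<Inter>?F" unfolding gen_star_subalg_def by simp
  have 1: "\<Inter>?F \<subseteq> CP" using CPF by blast
  have 2: "(\<lambda>_ _. 0) \<in> \<Inter>?F" using subalgD(2) by blast
  have 3: "\<forall>a\<in>\<Inter>?F. \<forall>b\<in>\<Inter>?F. (\<lambda>k x. a k x + b k x) \<in> \<Inter>?F"
  proof (intro ballI InterI)
    fix a b B assume "a \<in> \<Inter>?F" "b \<in> \<Inter>?F" "B \<in> ?F"
    then show "(\<lambda>k x. a k x + b k x) \<in> B" using subalgD(3)[of T cj B a b] by blast
  qed
  have 4: "\<forall>c. \<forall>a\<in>\<Inter>?F. cp_smult c a \<in> \<Inter>?F"
  proof (intro allI ballI InterI)
    fix c a B assume "a \<in> \<Inter>?F" "B \<in> ?F"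
    then show "cp_smult c a \<in> B" using subalgD(4)[of T cj B a c] by blast
  qed
  have 5: "\<forall>a\<in>\<Inter>?F. \<forall>b\<in>\<Inter>?F. cp_mult T a b \<in> \<Inter>?F"
  proof (intro ballI InterI)
    fix a b B assume "a \<in> \<Inter>?F" "b \<in> \<Inter>?F" "B \<in> ?F"
    then show "cp_mult T a b \<in> B" using subalgD(5)[of T cj B a b] by blast
  qed
  have 6: "\<forall>a\<in>\<Inter>?F. cp_star T cj a \<in> \<Inter>?F"
  proof (intro ballI InterI)
    fix a B assume "a \<in> \<Inter>?F" "B \<in> ?F"
    then show "cp_star T cj a \<in> B" using subalgD(6)[of T cj B a] by blast
  qed
  show "star_subalg T cj (gen_star_subalg T cj S)"
    unfolding G star_subalg_def[of T cj "\<Inter>?F"] using 1 2 3 4 5 6 by (intro conjI)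
qed

lemma subalg_sum:
  assumes "star_subalg T cj B" "finite F" "\<And>v. v \<in> F \<Longrightarrow> cp_mono i (g v) \<in> B"
  shows "cp_mono i (\<lambda>x. \<Sum>v\<in>F. g v x) \<in> B"
  using assms(2,3)
proof (induction F rule: finite_induct)
  case empty then show ?case using assms(1) by (simp add: cp_mono_zero star_subalg_def)
next
  case (insert a F)
  then have "(\<lambda>k x. cp_mono i (g a) k x + cp_mono i (\<lambda>x. \<Sum>v\<in>F. g v x) k x) \<in> B"
    using assms(1) unfolding star_subalg_def by blast
  then show ?case using insert by (simp add: cp_mono_add)
qed



lemma Tpow_open:
  assumes "\<And>U. open U \<Longrightarrow> open (T -` U)" "\<And>U. open U \<Longrightarrow> open (inv T -` U)" "open U"
  shows "open (Tpow T i -` U)"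
proof (cases "0 \<le> i")
  case True
  then have "Tpow T i = T ^^ nat i" by (simp add: Tpow_def)
  then show ?thesis using funpow_open_vimage[OF assms(1) assms(3)] by simp
next
  case False
  then have "Tpow T i = inv T ^^ nat (- i)" by (simp add: Tpow_def)
  then show ?thesis using funpow_open_vimage[OF assms(2) assms(3)] by simp
qed

lemma CP_add:
  assumes a: "a \<in> CP" and b: "b \<in> CP"
  shows "(\<lambda>k x. a k x + b k x) \<in> (CP :: (int \<Rightarrow> 'a::topological_space \<Rightarrow> 'k::field) set)"
proof -
  have fa: "finite {i. a i \<noteq> (\<lambda>_. 0)}" and la: "\<And>i. loc_const (a i)" using a unfolding CP_def by blast+
  have fb: "finite {i. b i \<noteq> (\<lambda>_. 0)}" and lb: "\<And>i. loc_const (b i)" using b unfolding CP_def by blast+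
  have "{k. (\<lambda>x. a k x + b k x) \<noteq> (\<lambda>_. 0)} \<subseteq> {i. a i \<noteq> (\<lambda>_. 0)} \<union> {i. b i \<noteq> (\<lambda>_. 0)}" by (auto simp: fun_eq_iff)
  then have "finite {k. (\<lambda>x. a k x + b k x) \<noteq> (\<lambda>_. 0)}" using fa fb finite_subset by blast
  moreover have "\<And>k. loc_const (\<lambda>x. a k x + b k x)" by (rule lc_bin[OF la lb, of "(+)"])
  ultimately show ?thesis unfolding CP_def by blast
qed

lemma CP_smult:
  assumes a: "a \<in> CP"
  shows "cp_smult c a \<in> (CP :: (int \<Rightarrow> 'a::topological_space \<Rightarrow> 'k::field) set)"
proof -
  have fa: "finite {i. a i \<noteq> (\<lambda>_. 0)}" and la: "\<And>i. loc_const (a i)" using a by (auto simp: CP_def)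
  have "{k. cp_smult c a k \<noteq> (\<lambda>_. 0)} \<subseteq> {i. a i \<noteq> (\<lambda>_. 0)}" by (auto simp: cp_smult_def)
  then have "finite {k. cp_smult c a k \<noteq> (\<lambda>_. 0)}" using fa finite_subset by blast
  moreover have "\<And>k. loc_const (cp_smult c a k)"
    unfolding cp_smult_def by (rule lc_post[OF la, of "\<lambda>v. c * v"])
  ultimately show ?thesis by (simp add: CP_def)
qed

lemma CP_mult:
  assumes TP: "\<And>i U. open U \<Longrightarrow> open (Tpow T i -` U)"
  assumes a: "a \<in> CP" and b: "b \<in> CP"
  shows "cp_mult T a b \<in> (CP :: (int \<Rightarrow> 'a::topological_space \<Rightarrow> 'k::field) set)"
proof -
  let ?Sa = "{i. a i \<noteq> (\<lambda>_. 0)}"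
  let ?Sb = "{i. b i \<noteq> (\<lambda>_. 0)}"
  have fa: "finite ?Sa" and la: "\<And>i. loc_const (a i)" using a by (auto simp: CP_def)
  have fb: "finite ?Sb" and lb: "\<And>i. loc_const (b i)" using b by (auto simp: CP_def)
  have "{k. cp_mult T a b k \<noteq> (\<lambda>_. 0)} \<subseteq> (\<lambda>(i,j). i + j) ` (?Sa \<times> ?Sb)"
  proof
    fix k assume "k \<in> {k. cp_mult T a b k \<noteq> (\<lambda>_. 0)}"
    then obtain x where "cp_mult T a b k x \<noteq> 0" by auto
    then have "(\<Sum>i\<in>?Sa. a i x * b (k - i) (Tpow T (- i) x)) \<noteq> 0" by (simp add: cp_mult_def)
    then obtain i where i: "i \<in> ?Sa" "a i x * b (k - i) (Tpow T (- i) x) \<noteq> 0"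
      by (rule sum.not_neutral_contains_not_neutral)
    then have "b (k - i) (Tpow T (- i) x) \<noteq> 0" by simp
    then have "b (k - i) \<noteq> (\<lambda>_. 0)" by (metis)
    then have "k - i \<in> ?Sb" by simp
    then have "(i, k - i) \<in> ?Sa \<times> ?Sb" using i(1) by blast
    moreover have "k = (\<lambda>(i,j). i + j) (i, k - i)" by simp
    ultimately show "k \<in> (\<lambda>(i,j). i + j) ` (?Sa \<times> ?Sb)" by blast
  qed
  moreover have "finite ((\<lambda>(i,j). i + j) ` (?Sa \<times> ?Sb))" using fa fb by simp
  ultimately have "finite {k. cp_mult T a b k \<noteq> (\<lambda>_. 0)}" using finite_subset by blast
  moreover have "\<And>k. loc_const (cp_mult T a b k)"
  proof -
    fix k
    have "\<And>i. loc_const (\<lambda>x. a i x * b (k - i) (Tpow T (- i) x))"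
    proof -
      fix i
      have "loc_const (\<lambda>x. b (k - i) (Tpow T (- i) x))" by (rule lc_comp[OF lb TP])
      then show "loc_const (\<lambda>x. a i x * b (k - i) (Tpow T (- i) x))" by (rule lc_bin[OF la, of _ "(*)"])
    qed
    then have "loc_const (\<lambda>x. \<Sum>i\<in>?Sa. a i x * b (k - i) (Tpow T (- i) x))"
      using lc_sum[OF fa, of "\<lambda>i x. a i x * b (k - i) (Tpow T (- i) x)"] by blast
    then show "loc_const (cp_mult T a b k)" by (simp add: cp_mult_def)
  qed
  ultimately show ?thesis by (simp add: CP_def)
qed

lemma CP_star:
  assumes TP: "\<And>i U. open U \<Longrightarrow> open (Tpow T i -` U)" and cj0: "cj 0 = 0"
  assumes a: "a \<in> CP"
  shows "cp_star T cj a \<in> (CP :: (int \<Rightarrow> 'a::topological_space \<Rightarrow> 'k::field) set)"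
proof -
  let ?Sa = "{i. a i \<noteq> (\<lambda>_. 0)}"
  have fa: "finite ?Sa" and la: "\<And>i. loc_const (a i)" using a by (auto simp: CP_def)
  have "{k. cp_star T cj a k \<noteq> (\<lambda>_. 0)} \<subseteq> uminus ` ?Sa"
  proof
    fix k assume "k \<in> {k. cp_star T cj a k \<noteq> (\<lambda>_. 0)}"
    then have "a (- k) \<noteq> (\<lambda>_. 0)" using cj0 by (auto simp: cp_star_def)
    then have "- k \<in> ?Sa" by simp
    then show "k \<in> uminus ` ?Sa" by (intro image_eqI[of _ _ "- k"]) auto
  qed
  then have "finite {k. cp_star T cj a k \<noteq> (\<lambda>_. 0)}" using fa finite_subset by blast
  moreover have "\<And>k. loc_const (cp_star T cj a k)"
  proof -
    fix k
    have "loc_const (\<lambda>x. a (-k) (Tpow T (- k) x))" by (rule lc_comp[OF la TP])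
    then show "loc_const (cp_star T cj a k)" unfolding cp_star_def by (rule lc_post[of _ cj])
  qed
  ultimately show ?thesis by (simp add: CP_def)
qed

lemma CP_star_subalg:
  assumes hT: "\<And>U. open U \<Longrightarrow> open (T -` U)" and hTi: "\<And>U. open U \<Longrightarrow> open (inv T -` U)"
    and cj0: "cj 0 = 0"
  shows "star_subalg T cj (CP :: (int \<Rightarrow> 'a::topological_space \<Rightarrow> 'k::field) set)"
proof -
  have TP: "\<And>i U. open U \<Longrightarrow> open (Tpow T i -` U)" by (rule Tpow_open[OF hT hTi])
  have z: "(\<lambda>_ _. 0) \<in> (CP :: (int \<Rightarrow> 'a \<Rightarrow> 'k) set)"
  proof -
    have "cp_mono 0 (\<lambda>x::'a. 0::'k) \<in> CP" by (rule CP_mono[OF lc_const])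
    then show ?thesis by (simp only: cp_mono_zero)
  qed
  have m: "\<forall>a\<in>(CP :: (int \<Rightarrow> 'a \<Rightarrow> 'k) set). \<forall>b\<in>CP. cp_mult T a b \<in> CP"
    using CP_mult[where T=T, OF TP] by blast
  have st: "\<forall>a\<in>(CP :: (int \<Rightarrow> 'a \<Rightarrow> 'k) set). cp_star T cj a \<in> CP"
    using CP_star[where T=T and cj=cj, OF TP cj0] by blast
  show ?thesis unfolding star_subalg_def
    using CP_add CP_smult z m st by blast
qed



lemma lc_finite_range:
  assumes "compact (UNIV :: 'a::topological_space set)" "loc_const (f :: 'a \<Rightarrow> 'b)"
  shows "finite (range f)"
proof -
  let ?T = "(\<lambda>v. f -` {v}) ` UNIV"
  have "UNIV \<subseteq> \<Union>?T" by blast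
  moreover have "\<And>B. B \<in> ?T \<Longrightarrow> open B" using lc_open_vimage[OF assms(2)] by blast
  ultimately obtain T' where T': "T' \<subseteq> ?T" "finite T'" "UNIV \<subseteq> \<Union>T'"
    using compactE[OF assms(1)] by metis
  have "range f \<subseteq> (\<lambda>B. f (SOME x. x \<in> B)) ` T'"
  proof
    fix v assume "v \<in> range f"
    then obtain x where x: "v = f x" by blast
    obtain B where B: "B \<in> T'" "x \<in> B" using T'(3) by blast
    then obtain w where w: "B = f -` {w}" using T'(1) by blast
    have "(SOME x. x \<in> B) \<in> B" using B(2) by (rule someI)
    then have "f (SOME x. x \<in> B) = w" using w by blast
    moreover have "f x = w" using B(2) w by blast
    ultimately show "v \<in> (\<lambda>B. f (SOME x. x \<in> B)) ` T'" using B(1) x by (metis image_eqI)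
  qed
  then show ?thesis using T'(2) finite_subset by blast
qed

lemma lc_decomp:
  assumes "finite R" "range f \<subseteq> R"
  shows "f x = (\<Sum>v\<in>R. v * chi (f -` {v}) x :: 'k::field)"
proof -
  have "(\<Sum>v\<in>R. v * chi (f -` {v}) x) = (\<Sum>v\<in>R. if v = f x then v else 0)"
    by (intro sum.cong) (auto simp: chi_def)
  also have "\<dots> = f x" using assms by (subst sum.delta) auto
  finally show ?thesis by simp
qed

lemma lc_clopen_fiber: "loc_const f \<Longrightarrow> clopen_set (f -` {v})"
proof -
  assume "loc_const f"
  then have "open (f -` {v})" "open (f -` (- {v}))" using lc_open_vimage by blast+
  then show ?thesis unfolding clopen_set_def closed_def by (simp add: vimage_Compl)
qed

lemma cp_mono_star:
  assumes "cj 0 = 0"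
  shows "cp_star T cj (cp_mono 1 g) = cp_mono (-1) (\<lambda>x. cj (g (T x)))"
proof -
  have "Tpow T 1 = T" by (simp add: Tpow_def)
  then show ?thesis using assms by (auto simp: cp_star_def cp_mono_def fun_eq_iff)
qed

lemma chi_cj: "cj 0 = 0 \<Longrightarrow> cj 1 = 1 \<Longrightarrow> chi Z x * cj (chi Z x) = (chi Z x :: 'k::field)"
  by (simp add: chi_def)

locale locset =
  fixes T :: "'a::topological_space \<Rightarrow> 'a" and cj :: "'k::field \<Rightarrow> 'k" and y :: 'a
    and E :: "nat \<Rightarrow> 'a set" and P :: "nat \<Rightarrow> 'a set set"
  assumes cpt: "compact (UNIV :: 'a set)"
    and hT: "\<And>U. open U \<Longrightarrow> open (T -` U)" and hTi: "\<And>U. open U \<Longrightarrow> open (inv T -` U)"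
    and Tinv: "\<And>x. T (inv T x) = x"
    and cj0: "cj 0 = 0" and cj1: "cj 1 = 1"
    and E_clopen: "\<And>n. clopen_set (E n)"
    and yE: "\<And>n. y \<in> E n"
    and P_finite: "\<And>n. finite (P n)"
    and P_clopen: "\<And>n Z. Z \<in> P n \<Longrightarrow> clopen_set Z"
    and P_disjoint: "\<And>n Z W. Z \<in> P n \<Longrightarrow> W \<in> P n \<Longrightarrow> Z \<noteq> W \<Longrightarrow> Z \<inter> W = {}"
    and P_union: "\<And>n. \<Union>(P n) = UNIV - E n"
    and P_refine: "\<And>n Z. Z \<in> insert (E (Suc n)) (P (Suc n)) \<Longrightarrow>
                     \<exists>W \<in> insert (E n) (P n). Z \<subseteq> W"
    and P_generates: "\<And>U. open U \<longleftrightarrow> generate_topology (\<Union>n. insert (E n) (P n)) U"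
begin

definition cells :: "nat \<Rightarrow> 'a set set" where "cells n = insert (E n) (P n)"

lemma cells_clopen: "C \<in> cells n \<Longrightarrow> clopen_set C"
  unfolding cells_def using E_clopen P_clopen by blast

lemma cells_disj: "C \<in> cells n \<Longrightarrow> C' \<in> cells n \<Longrightarrow> C \<noteq> C' \<Longrightarrow> C \<inter> C' = {}"
proof -
  assume C: "C \<in> cells n" and C': "C' \<in> cells n" and ne: "C \<noteq> C'"
  have sub: "\<And>Z. Z \<in> P n \<Longrightarrow> Z \<inter> E n = {}" using P_union[of n] by blast
  show ?thesis
  proof (cases "C = E n")
    case True
    then have "C' \<in> P n" using C' ne unfolding cells_def by blast
    then show ?thesis using sub True by blast
  next
    case False
    then have CP: "C \<in> P n" using C unfolding cells_def by blast
    show ?thesis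
    proof (cases "C' = E n")
      case True then show ?thesis using sub CP by blast
    next
      case False
      then have "C' \<in> P n" using C' unfolding cells_def by blast
      then show ?thesis using P_disjoint CP ne by blast
    qed
  qed
qed

lemma cells_cover: "\<exists>C\<in>cells n. x \<in> C"
  using P_union[of n] unfolding cells_def by blast

lemma refine_iter:
  assumes "m \<le> n" shows "\<forall>D\<in>cells n. \<exists>W\<in>cells m. D \<subseteq> W"
  using assms
proof (induction n rule: dec_induct)
  case base
  show ?case
  proof
    fix D assume "D \<in> cells m"
    then show "\<exists>W\<in>cells m. D \<subseteq> W" by (rule bexI[of _ D, rotated]) (rule subset_refl)
  qed
next
  case (step n)
  show ?case
  proof
    fix D assume "D \<in> cells (Suc n)"
    then have "D \<in> insert (E (Suc n)) (P (Suc n))" unfolding cells_def .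
    then have "\<exists>W \<in> insert (E n) (P n). D \<subseteq> W" by (rule P_refine)
    then obtain W1 where W1: "W1 \<in> cells n" "D \<subseteq> W1" unfolding cells_def by blast
    from step.IH W1(1) obtain W where W: "W \<in> cells m" "W1 \<subseteq> W" by (meson bspec bexE)
    show "\<exists>W\<in>cells m. D \<subseteq> W" using W W1(2) by (meson subset_trans)
  qed
qed

lemma refine:
  assumes "m \<le> n" "D \<in> cells n" "W \<in> cells m" "D \<inter> W \<noteq> {}"
  shows "D \<subseteq> W"
proof -
  obtain W' where W': "W' \<in> cells m" "D \<subseteq> W'" using refine_iter[OF assms(1)] assms(2) by blast
  then have "W' \<inter> W \<noteq> {}" using assms(4) by blast
  then have "W' = W" using cells_disj[OF W'(1) assms(3)] by blast
  then show ?thesis using W' by blast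
qed

lemma open_cells:
  assumes "open U" shows "\<forall>x\<in>U. \<exists>m. \<exists>C\<in>cells m. x \<in> C \<and> C \<subseteq> U"
proof -
  have "generate_topology (\<Union>n. insert (E n) (P n)) U" using assms P_generates by blast
  then show ?thesis
  proof (induction rule: generate_topology.induct)
    case UNIV
    show ?case
    proof
      fix x :: 'a
      obtain C where "C \<in> cells 0" "x \<in> C" using cells_cover by blast
      then show "\<exists>m. \<exists>C\<in>cells m. x \<in> C \<and> C \<subseteq> UNIV" by blast
    qed
  next
    case (Int a b)
    show ?case
    proof
      fix x assume x: "x \<in> a \<inter> b"
      obtain m1 C1 where C1: "C1 \<in> cells m1" "x \<in> C1" "C1 \<subseteq> a" using Int.IH(1) x by blast
      obtain m2 C2 where C2: "C2 \<in> cells m2" "x \<in> C2" "C2 \<subseteq> b" using Int.IH(2) x by blast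
      show "\<exists>m. \<exists>C\<in>cells m. x \<in> C \<and> C \<subseteq> a \<inter> b"
      proof (cases "m1 \<le> m2")
        case True
        then have "C2 \<subseteq> C1" using refine[OF True C2(1) C1(1)] C1(2) C2(2) by blast
        then show ?thesis using C1 C2 by blast
      next
        case False
        then have "m2 \<le> m1" by simp
        then have "C1 \<subseteq> C2" using refine[OF _ C1(1) C2(1)] C1(2) C2(2) by blast
        then show ?thesis using C1 C2 by blast
      qed
    qed
  next
    case (UN K)
    show ?case
    proof
      fix x assume "x \<in> \<Union>K"
      then obtain k where k: "k \<in> K" "x \<in> k" by blast
      then obtain m C where "C \<in> cells m" "x \<in> C" "C \<subseteq> k" using UN.IH by blast
      then show "\<exists>m. \<exists>C\<in>cells m. x \<in> C \<and> C \<subseteq> \<Union>K" using k by blast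
    qed
  next
    case (Basis s)
    then obtain n where "s \<in> cells n" unfolding cells_def by blast
    then show ?case by blast
  qed
qed

lemma clopen_refined:
  assumes "clopen_set V"
  shows "\<exists>N. \<forall>n\<ge>N. \<forall>D\<in>cells n. D \<inter> V \<noteq> {} \<longrightarrow> D \<subseteq> V"
proof -
  have cV: "compact V"
  proof -
    have "compact (UNIV \<inter> V)" using cpt assms unfolding clopen_set_def by (intro compact_Int_closed) auto
    then show ?thesis by simp
  qed
  let ?T = "{C. (\<exists>m. C \<in> cells m) \<and> C \<subseteq> V}"
  have cov: "V \<subseteq> \<Union>?T" using open_cells assms unfolding clopen_set_def by blast
  have op: "\<And>B. B \<in> ?T \<Longrightarrow> open B" using cells_clopen unfolding clopen_set_def by blast
  obtain T' where T': "T' \<subseteq> ?T" "finite T'" "V \<subseteq> \<Union>T'"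
    using cov op by (rule compactE[OF cV])
  define lev where "lev C = (SOME m. C \<in> cells m)" for C
  have lev: "C \<in> cells (lev C)" if "C \<in> T'" for C
  proof -
    from that T'(1) obtain m where "C \<in> cells m" by blast
    then show ?thesis unfolding lev_def by (rule someI)
  qed
  define N where "N = Max (insert 0 (lev ` T'))"
  have levN: "\<And>C. C \<in> T' \<Longrightarrow> lev C \<le> N" unfolding N_def using T'(2) by simp
  show ?thesis
  proof (intro exI[of _ N] allI impI ballI)
    fix n D assume n: "N \<le> n" and D: "D \<in> cells n" and DV: "D \<inter> V \<noteq> {}"
    then obtain x where x: "x \<in> D" "x \<in> V" by blast
    then obtain C where C: "C \<in> T'" "x \<in> C" using T'(3) by blast
    have "lev C \<le> n" using levN[OF C(1)] n by simp
    then have "D \<subseteq> C" using refine[OF _ D lev[OF C(1)]] x C by blast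
    then show "D \<subseteq> V" using C(1) T'(1) by blast
  qed
qed

lemma clopen_union_P:
  assumes "clopen_set V" "y \<notin> V"
  shows "\<exists>N. \<forall>n\<ge>N. V = \<Union>{D\<in>P n. D \<subseteq> V}"
proof -
  obtain N where N: "\<forall>n\<ge>N. \<forall>D\<in>cells n. D \<inter> V \<noteq> {} \<longrightarrow> D \<subseteq> V"
    using clopen_refined[OF assms(1)] by blast
  show ?thesis
  proof (intro exI[of _ N] allI impI)
    fix n assume n: "N \<le> n"
    show "V = \<Union>{D\<in>P n. D \<subseteq> V}"
    proof
      show "V \<subseteq> \<Union>{D\<in>P n. D \<subseteq> V}"
      proof
        fix x assume x: "x \<in> V"
        obtain D where D: "D \<in> cells n" "x \<in> D" using cells_cover by blast
        then have DV: "D \<subseteq> V" using N n x by blast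
        then have "D \<noteq> E n" using yE[of n] assms(2) by blast
        then have "D \<in> P n" using D(1) unfolding cells_def by blast
        then show "x \<in> \<Union>{D\<in>P n. D \<subseteq> V}" using D(2) DV by blast
      qed
    qed blast
  qed
qed

lemma P_in_later:
  assumes "m \<le> n" "Z \<in> P m" shows "Z = \<Union>{D\<in>P n. D \<subseteq> Z}"
proof
  show "Z \<subseteq> \<Union>{D\<in>P n. D \<subseteq> Z}"
  proof
    fix x assume x: "x \<in> Z"
    obtain D where D: "D \<in> cells n" "x \<in> D" using cells_cover by blast
    have "Z \<in> cells m" using assms(2) unfolding cells_def by blast
    then have DZ: "D \<subseteq> Z" using refine[OF assms(1) D(1)] x D(2) by blast
    have "y \<notin> Z" using P_union[of m] yE[of m] assms(2) by blast
    then have "D \<noteq> E n" using DZ yE[of n] by blast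
    then have "D \<in> P n" using D(1) unfolding cells_def by blast
    then show "x \<in> \<Union>{D\<in>P n. D \<subseteq> Z}" using D(2) DZ by blast
  qed
qed blast

definition Sg :: "nat \<Rightarrow> (int \<Rightarrow> 'a \<Rightarrow> 'k) set" where
  "Sg n = {cp_mono 1 (chi Z) | Z. Z \<in> P n}"

definition Ag :: "nat \<Rightarrow> (int \<Rightarrow> 'a \<Rightarrow> 'k) set" where
  "Ag n = gen_unital_star_subalg T cj (Sg n)"

lemma CP_sa: "star_subalg T cj (CP :: (int \<Rightarrow> 'a \<Rightarrow> 'k) set)"
  by (rule CP_star_subalg[where T=T and cj=cj, OF hT hTi cj0])

lemma cp_one_CP: "cp_one \<in> (CP :: (int \<Rightarrow> 'a \<Rightarrow> 'k) set)"
  unfolding cp_one_def by (rule CP_mono[OF lc_const])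

lemma A_sa: "star_subalg T cj (Ag n)" and A_gen: "insert cp_one (Sg n) \<subseteq> Ag n"
proof -
  have "insert cp_one (Sg n) \<subseteq> CP"
    using cp_one_CP CP_mono[OF lc_chi[OF P_clopen]] unfolding Sg_def by blast
  then show "star_subalg T cj (Ag n)" "insert cp_one (Sg n) \<subseteq> Ag n"
    unfolding Ag_def gen_unital_star_subalg_def using gen_star_subalg[OF CP_sa] by blast+
qed

lemma A_one: "cp_one \<in> Ag n" using A_gen by blast

lemma A_deg1: "Z \<in> P n \<Longrightarrow> cp_mono 1 (chi Z) \<in> Ag n"
  using A_gen unfolding Sg_def by blast

lemma A_deg0: assumes "Z \<in> P n" shows "cp_mono 0 (chi Z) \<in> Ag n"
proof -
  have a: "cp_mono 1 (chi Z) \<in> Ag n" by (rule A_deg1[OF assms])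
  have "cp_mult T (cp_mono 1 (chi Z)) (cp_star T cj (cp_mono 1 (chi Z))) \<in> Ag n"
    using subalgD(5)[OF A_sa a subalgD(6)[OF A_sa a]] .
  moreover have "cp_mult T (cp_mono 1 (chi Z)) (cp_star T cj (cp_mono 1 (chi Z))) = cp_mono 0 (chi Z)"
  proof -
    have "Tpow T (-1) = inv T" by (simp add: Tpow_def)
    then have "cp_mult T (cp_mono 1 (chi Z)) (cp_star T cj (cp_mono 1 (chi Z)))
       = cp_mono 0 (\<lambda>x. chi Z x * cj (chi Z x))"
      by (simp add: cp_mono_star[where cj=cj and T=T, OF cj0] cp_mono_mult Tinv)
    moreover have e: "(\<lambda>x. chi Z x * cj (chi Z x)) = chi Z" by (rule ext) (rule chi_cj[OF cj0 cj1])
    ultimately show ?thesis by (simp only: e)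
  qed
  ultimately show ?thesis by simp
qed

lemma A_union:
  assumes "F \<subseteq> P n"
  shows "cp_mono 1 (chi (\<Union>F)) \<in> Ag n" "cp_mono 0 (chi (\<Union>F)) \<in> Ag n"
proof -
  have fF: "finite F" using P_finite assms finite_subset by blast
  have eq: "chi (\<Union>F) = (\<lambda>x. \<Sum>D\<in>F. chi D x :: 'k)"
    using chi_Union[OF fF] P_disjoint assms by (metis subsetD)
  show "cp_mono 1 (chi (\<Union>F)) \<in> Ag n" unfolding eq
    using subalg_sum[OF A_sa fF, of 1 chi] A_deg1 assms by blast
  show "cp_mono 0 (chi (\<Union>F)) \<in> Ag n" unfolding eq
    using subalg_sum[OF A_sa fF, of 0 chi] A_deg0 assms by blast
qed

lemma A_mono: assumes "m \<le> n" shows "Ag m \<subseteq> Ag n"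
proof -
  have "insert cp_one (Sg m) \<subseteq> Ag n"
  proof
    fix a assume "a \<in> insert cp_one (Sg m)"
    then consider "a = cp_one" | Z where "Z \<in> P m" "a = cp_mono 1 (chi Z)" unfolding Sg_def by blast
    then show "a \<in> Ag n"
    proof cases
      case 1 then show ?thesis using A_one by simp
    next
      case 2
      then have "a = cp_mono 1 (chi (\<Union>{D\<in>P n. D \<subseteq> Z}))" using P_in_later[OF assms] by metis
      then show ?thesis using A_union(1)[of "{D\<in>P n. D \<subseteq> Z}"] by blast
    qed
  qed
  then show ?thesis unfolding Ag_def[of m] gen_unital_star_subalg_def
    by (rule gen_least[OF A_sa])
qed

definition LHS where "LHS = (\<Union>n. Ag n)"

lemma LHS_up:
  assumes "a \<in> LHS" "b \<in> LHS" obtains n where "a \<in> Ag n" "b \<in> Ag n"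
proof -
  obtain m1 where m1: "a \<in> Ag m1" using assms(1) unfolding LHS_def by blast
  obtain m2 where m2: "b \<in> Ag m2" using assms(2) unfolding LHS_def by blast
  have "Ag m1 \<subseteq> Ag (max m1 m2)" "Ag m2 \<subseteq> Ag (max m1 m2)" by (simp_all add: A_mono)
  then have "a \<in> Ag (max m1 m2)" "b \<in> Ag (max m1 m2)" using m1 m2 by (meson subsetD)+
  then show ?thesis by (rule that)
qed

lemma LHS_sa: "star_subalg T cj LHS"
proof -
  have 1: "LHS \<subseteq> CP" unfolding LHS_def using subalgD(1)[OF A_sa] by blast
  have 2: "(\<lambda>_ _. 0) \<in> LHS" unfolding LHS_def using subalgD(2)[OF A_sa] by blast
  have 3: "\<forall>a\<in>LHS. \<forall>b\<in>LHS. (\<lambda>k x. a k x + b k x) \<in> LHS"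
  proof (intro ballI)
    fix a b assume "a \<in> LHS" "b \<in> LHS"
    then obtain n where "a \<in> Ag n" "b \<in> Ag n" by (rule LHS_up)
    then have "(\<lambda>k x. a k x + b k x) \<in> Ag n" by (rule subalgD(3)[OF A_sa])
    then show "(\<lambda>k x. a k x + b k x) \<in> LHS" unfolding LHS_def by blast
  qed
  have 4: "\<forall>c. \<forall>a\<in>LHS. cp_smult c a \<in> LHS"
    unfolding LHS_def using subalgD(4)[OF A_sa] by blast
  have 5: "\<forall>a\<in>LHS. \<forall>b\<in>LHS. cp_mult T a b \<in> LHS"
  proof (intro ballI)
    fix a b assume "a \<in> LHS" "b \<in> LHS"
    then obtain n where "a \<in> Ag n" "b \<in> Ag n" by (rule LHS_up)
    then have "cp_mult T a b \<in> Ag n" by (rule subalgD(5)[OF A_sa])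
    then show "cp_mult T a b \<in> LHS" unfolding LHS_def by blast
  qed
  have 6: "\<forall>a\<in>LHS. cp_star T cj a \<in> LHS"
    unfolding LHS_def using subalgD(6)[OF A_sa] by blast
  show ?thesis unfolding star_subalg_def using 1 2 3 4 5 6 by (intro conjI)
qed

lemma LHS_I: "a \<in> Ag n \<Longrightarrow> a \<in> LHS" unfolding LHS_def by blast

lemma LHS_one: "cp_one \<in> LHS" using A_one LHS_I by blast

lemma LHS_deg_noty:
  assumes "clopen_set V" "y \<notin> V"
  shows "cp_mono 1 (chi V) \<in> LHS" "cp_mono 0 (chi V) \<in> LHS"
proof -
  obtain N where "\<forall>n\<ge>N. V = \<Union>{D\<in>P n. D \<subseteq> V}" using clopen_union_P[OF assms] by blast
  then have V: "V = \<Union>{D\<in>P N. D \<subseteq> V}" by (meson order_refl)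
  have sub: "{D\<in>P N. D \<subseteq> V} \<subseteq> P N" by blast
  have e1: "cp_mono 1 (chi V) = cp_mono 1 (chi (\<Union>{D\<in>P N. D \<subseteq> V}))"
    using V by (rule arg_cong[where f="\<lambda>W. cp_mono 1 (chi W)"])
  have e0: "cp_mono 0 (chi V) = cp_mono 0 (chi (\<Union>{D\<in>P N. D \<subseteq> V}))"
    using V by (rule arg_cong[where f="\<lambda>W. cp_mono 0 (chi W)"])
  show "cp_mono 1 (chi V) \<in> LHS" unfolding e1 by (rule LHS_I[OF A_union(1)[OF sub]])
  show "cp_mono 0 (chi V) \<in> LHS" unfolding e0 by (rule LHS_I[OF A_union(2)[OF sub]])
qed

lemma LHS_deg0:
  assumes "clopen_set V" shows "cp_mono 0 (chi V) \<in> LHS"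
proof (cases "y \<in> V")
  case False then show ?thesis using LHS_deg_noty assms by blast
next
  case True
  have c: "clopen_set (- V)" using assms unfolding clopen_set_def by (simp add: open_Compl closed_Compl)
  have m: "cp_mono 0 (chi (- V)) \<in> LHS" using LHS_deg_noty(2)[OF c] True by blast
  have "(\<lambda>k x. cp_one k x + cp_smult (-1) (cp_mono 0 (chi (- V))) k x) \<in> LHS"
    using subalgD(3)[OF LHS_sa LHS_one subalgD(4)[OF LHS_sa m]] .
  moreover have "(\<lambda>k x. cp_one k x + cp_smult (-1) (cp_mono 0 (chi (- V))) k x) = cp_mono 0 (chi V)"
    unfolding cp_one_def cp_mono_smult cp_mono_add by (auto simp: chi_def cp_mono_def fun_eq_iff)
  ultimately show ?thesis by metis
qed

lemma LHS_lc:
  assumes "loc_const f" shows "cp_mono 0 f \<in> LHS"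
proof -
  have fR: "finite (range f)" by (rule lc_finite_range[OF cpt assms])
  have eq: "f = (\<lambda>x. \<Sum>v\<in>range f. v * chi (f -` {v}) x)"
    by (rule ext) (rule lc_decomp[OF fR subset_refl])
  have "\<And>v. cp_mono 0 (\<lambda>x. v * chi (f -` {v}) x) \<in> LHS"
  proof -
    fix v
    have "cp_smult v (cp_mono 0 (chi (f -` {v}))) \<in> LHS"
      using subalgD(4)[OF LHS_sa LHS_deg0[OF lc_clopen_fiber[OF assms]]] .
    then show "cp_mono 0 (\<lambda>x. v * chi (f -` {v}) x) \<in> LHS" by (simp add: cp_mono_smult)
  qed
  then have "cp_mono 0 (\<lambda>x. \<Sum>v\<in>range f. v * chi (f -` {v}) x) \<in> LHS"
    using subalg_sum[OF LHS_sa fR, of 0 "\<lambda>v x. v * chi (f -` {v}) x"] by blast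
  then show ?thesis by (simp only: eq[symmetric])
qed

lemma LHS_CcK:
  assumes "f \<in> CcK (UNIV - {y})" shows "cp_mono 1 f \<in> LHS"
proof -
  obtain n :: nat and c :: "nat \<Rightarrow> 'k" and V :: "nat \<Rightarrow> 'a set" where V: "\<forall>i<n. clopen_set (V i) \<and> V i \<subseteq> UNIV - {y}"
    and f: "f = (\<lambda>x. \<Sum>i<n. c i * chi (V i) x)" using assms unfolding CcK_def mem_Collect_eq by blast
  have "\<And>i. i \<in> {..<n} \<Longrightarrow> cp_mono 1 (\<lambda>x. c i * chi (V i) x) \<in> LHS"
  proof -
    fix i assume "i \<in> {..<n}"
    then have "clopen_set (V i)" "y \<notin> V i" using V by auto
    then have "cp_smult (c i) (cp_mono 1 (chi (V i))) \<in> LHS"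
      using subalgD(4)[OF LHS_sa LHS_deg_noty(1)] by blast
    then show "cp_mono 1 (\<lambda>x. c i * chi (V i) x) \<in> LHS" by (simp add: cp_mono_smult)
  qed
  then have "cp_mono 1 (\<lambda>x. \<Sum>i<n. c i * chi (V i) x) \<in> LHS"
    using subalg_sum[OF LHS_sa, of "{..<n}" 1 "\<lambda>i x. c i * chi (V i) x"] by blast
  then show ?thesis using f by simp
qed

definition R :: "(int \<Rightarrow> 'a \<Rightarrow> 'k) set" where "R = {cp_mono 0 f | f. loc_const f} \<union> {cp_mono 1 f | f. f \<in> CcK (UNIV - {y})}"

lemma R_sub_LHS: "R \<subseteq> LHS"
proof
  fix a assume "a \<in> R"
  then consider f where "loc_const f" "a = cp_mono 0 f" | f where "f \<in> CcK (UNIV - {y})" "a = cp_mono 1 f"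
    unfolding R_def by blast
  then show "a \<in> LHS"
  proof cases
    case 1 then show ?thesis using LHS_lc[OF 1(1)] by simp
  next
    case 2 then show ?thesis using LHS_CcK[OF 2(1)] by simp
  qed
qed

lemma R_CP: "R \<subseteq> CP"
proof
  fix a assume "a \<in> R"
  then consider f where "loc_const f" "a = cp_mono 0 f" | f where "f \<in> CcK (UNIV - {y})" "a = cp_mono 1 f"
    unfolding R_def by blast
  then show "a \<in> CP"
  proof cases
    case 1 then show ?thesis using CP_mono[OF 1(1)] by simp
  next
    case 2 then show ?thesis using CP_mono[OF lc_CcK[OF 2(1)]] by simp
  qed
qed

lemma chi_CcK: "clopen_set Z \<Longrightarrow> y \<notin> Z \<Longrightarrow> chi Z \<in> (CcK (UNIV - {y}) :: ('a \<Rightarrow> 'k) set)"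
proof -
  assume Z: "clopen_set Z" "y \<notin> Z"
  have c1: "\<forall>i<(1::nat). clopen_set ((\<lambda>_. Z) i) \<and> (\<lambda>_. Z) i \<subseteq> UNIV - {y}"
    using Z by blast
  have c2: "chi Z = (\<lambda>x. \<Sum>i<(1::nat). (\<lambda>_. 1::'k) i * chi ((\<lambda>_. Z) i) x)"
    by (simp add: fun_eq_iff)
  have "(\<forall>i<(1::nat). clopen_set ((\<lambda>_. Z) i) \<and> (\<lambda>_. Z) i \<subseteq> UNIV - {y}) \<and>
        chi Z = (\<lambda>x. \<Sum>i<(1::nat). (\<lambda>_. 1::'k) i * chi ((\<lambda>_. Z) i) x)"
    using c1 c2 by (rule conjI)
  then show ?thesis unfolding CcK_def mem_Collect_eq
    by (intro exI[of _ "1::nat"] exI[of _ "\<lambda>_. 1::'k"] exI[of _ "\<lambda>_. Z"])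
qed

lemma main: "LHS = gen_star_subalg T cj R"
proof
  have Rsa: "star_subalg T cj (gen_star_subalg T cj R)" and Rsub: "R \<subseteq> gen_star_subalg T cj R"
    using gen_star_subalg[OF CP_sa R_CP] by blast+
  show "gen_star_subalg T cj R \<subseteq> LHS"
    by (rule gen_least[OF LHS_sa R_sub_LHS])
  show "LHS \<subseteq> gen_star_subalg T cj R"
    unfolding LHS_def
  proof (rule UN_least)
    fix n
    have "insert cp_one (Sg n) \<subseteq> gen_star_subalg T cj R"
    proof
      fix a assume "a \<in> insert cp_one (Sg n)"
      then consider "a = cp_one" | Z where "Z \<in> P n" "a = cp_mono 1 (chi Z)" unfolding Sg_def by blast
      then show "a \<in> gen_star_subalg T cj R"
      proof cases
        case 1
        have "cp_mono 0 (\<lambda>_. 1) \<in> {cp_mono 0 f | f. loc_const (f :: 'a \<Rightarrow> 'k)}"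
          using lc_const[of "1::'k"] by blast
        then have "cp_one \<in> R" unfolding R_def cp_one_def by (rule UnI1)
        then show ?thesis using Rsub 1 by blast
      next
        case 2
        have "y \<notin> Z" using P_union[of n] yE[of n] 2(1) by blast
        then have "chi Z \<in> (CcK (UNIV - {y}) :: ('a \<Rightarrow> 'k) set)" by (rule chi_CcK[OF P_clopen[OF 2(1)]])
        then have "a \<in> R" unfolding R_def using 2(2) by blast
        then show ?thesis using Rsub by blast
      qed
    qed
    then show "Ag n \<subseteq> gen_star_subalg T cj R" unfolding Ag_def gen_unital_star_subalg_def
      by (rule gen_least[OF Rsa])
  qed
qed
end


theorem lemma4p3:
  fixes T :: "'a::metric_space \<Rightarrow> 'a"
    and cj :: "'k::field \<Rightarrow> 'k"
    and y :: 'a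
    and E :: "nat \<Rightarrow> 'a set"
    and P :: "nat \<Rightarrow> 'a set set"
  assumes X_infinite: "infinite (UNIV :: 'a set)"
    and X_compact: "compact (UNIV :: 'a set)"
    and X_tdisc: "totally_disconnected_space TYPE('a)"
    and T_homeo: "\<exists>S. homeomorphism UNIV UNIV T S"
    and cj_add: "\<And>a b. cj (a + b) = cj a + cj b"
    and cj_mult: "\<And>a b. cj (a * b) = cj a * cj b"
    and cj_invol: "\<And>a. cj (cj a) = a"
    and E_clopen: "\<And>n. clopen_set (E n)"
    and E_decr: "\<And>n. E (Suc n) \<subseteq> E n"
    and E_inter: "(\<Inter>n. E n) = {y}"
    and P_finite: "\<And>n. finite (P n)"
    and P_clopen: "\<And>n Z. Z \<in> P n \<Longrightarrow> clopen_set Z"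
    and P_nonempty: "\<And>n Z. Z \<in> P n \<Longrightarrow> Z \<noteq> {}"
    and P_disjoint: "\<And>n Z W. Z \<in> P n \<Longrightarrow> W \<in> P n \<Longrightarrow> Z \<noteq> W \<Longrightarrow> Z \<inter> W = {}"
    and P_union: "\<And>n. \<Union>(P n) = UNIV - E n"
    and P_refine: "\<And>n Z. Z \<in> insert (E (Suc n)) (P (Suc n)) \<Longrightarrow>
                     \<exists>W \<in> insert (E n) (P n). Z \<subseteq> W"
    and P_generates: "\<And>U. open U \<longleftrightarrow> generate_topology (\<Union>n. insert (E n) (P n)) U"
  shows "(\<Union>n. gen_unital_star_subalg T cj {cp_mono 1 (chi Z) | Z. Z \<in> P n})
       = gen_star_subalg T cj
           ({cp_mono 0 f | f. loc_const f} \<union> {cp_mono 1 f | f. f \<in> CcK (UNIV - {y})})"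
proof -
  obtain Si where h: "homeomorphism UNIV UNIV T Si" using T_homeo by blast
  then have h1: "\<And>x. Si (T x) = x" and h2: "\<And>x. T (Si x) = x"
    and cT: "continuous_on UNIV T" and cS: "continuous_on UNIV Si"
    unfolding homeomorphism_def by auto
  have invT: "inv T = Si" by (rule inv_equality[OF h1 h2])
  have hT: "\<And>U. open U \<Longrightarrow> open (T -` U)" using cT by (simp add: open_vimage)
  have hTi: "\<And>U. open U \<Longrightarrow> open (inv T -` U)" unfolding invT using cS by (simp add: open_vimage)
  have Tinv: "\<And>x. T (inv T x) = x" unfolding invT by (rule h2)
  have cj0: "cj 0 = 0"
  proof -
    have "cj 0 + cj 0 = cj 0 + 0" using cj_add[of 0 0] by simp
    then show ?thesis by (rule add_left_imp_eq)
  qed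
  have cj1: "cj 1 = 1"
  proof -
    have "cj (cj 1) = cj (1 * cj 1)" by simp
    also have "\<dots> = cj 1 * cj (cj 1)" by (rule cj_mult)
    finally have "cj (cj 1) = cj 1 * cj (cj 1)" .
    then show ?thesis using cj_invol[of 1] by simp
  qed
  have yE: "\<And>n. y \<in> E n" using E_inter by blast
  interpret locset T cj y E P
    by (unfold_locales; (rule X_compact hT hTi Tinv cj0 cj1 E_clopen yE P_finite P_clopen P_disjoint P_union P_refine P_generates)?; assumption?)
  show ?thesis using main unfolding LHS_def Ag_def Sg_def R_def gen_unital_star_subalg_def .
qed

end
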